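(* For $n\ge 3$ and weights $w_1,\dots,w_{n-1}\in(0,1)$, let $H$ be the path $u_1u_2\cdots u_n$ with edge $u_ku_{k+1}$ of weight $w_k$, and define $E_n(w_1,\dots,w_{n-1})=\operatorname{eptw}(H,\{u_1,u_n\})$ (this equals the expected propagation time of a weighted cycle $C_n$ started from two adjacent blue vertices, where $w_1,\dots,w_{n-1}$ are the weights of the other $n-1$ edges listed in order along the cycle from one blue vertex to the other); also set $E_2:=0$ (no arguments). Then $E_3(w_1,w_2)=\frac{1}{w_1+w_2-w_1w_2}$, and for all $n\ge 4$, \[E_n(w_1,\dots,w_{n-1})=\frac{1+w_1(1-w_{n-1})E_{n-1}(w_2,\dots,w_{n-1})+(1-w_1)w_{n-1}E_{n-1}(w_1,\dots,w_{n-2})+w_1w_{n-1}E_{n-2}(w_2,\dots,w_{n-2})}{w_1+w_{n-1}-w_1w_{n-1}}.\] Consequently, for a weighted cycle $C_n$ ($n\ge 3$), $\operatorname{eptw}(C_n)$ is the minimum, over all pairs of adjacent vertices taken as the initial blue set, of the corresponding value $E_n(w_1,\dots,w_{n-1})$.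
   Context: Let $G$ be a finite simple graph in which each edge $uv$ has a weight $w_{uv}\in(0,1)$. Weighted zero forcing: start with a set $B\subseteq V(G)$ of blue vertices, all other vertices white. In each round, simultaneously, for every blue vertex $u$ that has exactly one white neighbor $v$ (with respect to the coloring at the start of the round), $u$ attempts to force $v$, succeeding with probability $w_{uv}$, all attempts being independent; a white vertex becomes blue at the end of the round if at least one attempt on it succeeds. $B$ is a weighted zero forcing set of $G$ if this process can eventually color all of $V(G)$ blue (equivalently, $B$ is a zero forcing set of the underlying unweighted graph under the standard rule); $\operatorname{Z}(G)$ is the minimum size of such a set. $\operatorname{ptw}(G,B)$ is the random variable giving the round in which the last white vertex becomes blue ($0$ if $B=V(G)$); $\operatorname{eptw}(G,B)=\mathbb{E}[\operatorname{ptw}(G,B)]$; $\operatorname{eptw}(G)=\min\{\operatorname{eptw}(G,B): B$ a weighted zero forcing set with $|B|=\operatorname{Z}(G)\}$. *)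

theory Defs
  imports "HOL-Probability.Product_PMF"
begin

text \<open>A weighted graph is given by a finite vertex set V, a symmetric irreflexive
  edge relation E on V and a (symmetric) weight function W on edges.\<close>

definition forcing_pairs :: "'a set \<Rightarrow> ('a \<Rightarrow> 'a \<Rightarrow> bool) \<Rightarrow> 'a set \<Rightarrow> ('a \<times> 'a) set" where
  "forcing_pairs V E B = {(u, v). u \<in> B \<and> v \<in> V - B \<and> E u v \<and>
                                  (\<forall>x \<in> V - B. E u x \<longrightarrow> x = v)}"

definition wzf_step :: "'a set \<Rightarrow> ('a \<Rightarrow> 'a \<Rightarrow> bool) \<Rightarrow> ('a \<Rightarrow> 'a \<Rightarrow> real) \<Rightarrow> 'a set \<Rightarrow> 'a set pmf" where
  "wzf_step V E W B =
     map_pmf (\<lambda>f. B \<union> {v. \<exists>u. (u, v) \<in> forcing_pairs V E B \<and> f (u, v)})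
       (Pi_pmf (forcing_pairs V E B) False (\<lambda>(u, v). bernoulli_pmf (W u v)))"

primrec wzf_state :: "'a set \<Rightarrow> ('a \<Rightarrow> 'a \<Rightarrow> bool) \<Rightarrow> ('a \<Rightarrow> 'a \<Rightarrow> real) \<Rightarrow> 'a set \<Rightarrow> nat \<Rightarrow> 'a set pmf" where
  "wzf_state V E W B 0 = return_pmf B"
| "wzf_state V E W B (Suc k) = bind_pmf (wzf_state V E W B k) (wzf_step V E W)"

definition ptw_gt :: "'a set \<Rightarrow> ('a \<Rightarrow> 'a \<Rightarrow> bool) \<Rightarrow> ('a \<Rightarrow> 'a \<Rightarrow> real) \<Rightarrow> 'a set \<Rightarrow> nat \<Rightarrow> real" where
  "ptw_gt V E W B k = 1 - pmf (wzf_state V E W B k) V"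

text \<open>eptw(G,B) = E[ptw(G,B)] = sum over k of P(ptw(G,B) > k) (ptw is nat-valued).\<close>
definition eptw_set :: "'a set \<Rightarrow> ('a \<Rightarrow> 'a \<Rightarrow> bool) \<Rightarrow> ('a \<Rightarrow> 'a \<Rightarrow> real) \<Rightarrow> 'a set \<Rightarrow> real" where
  "eptw_set V E W B = (\<Sum>k. ptw_gt V E W B k)"

inductive_set zf_closure :: "'a set \<Rightarrow> ('a \<Rightarrow> 'a \<Rightarrow> bool) \<Rightarrow> 'a set \<Rightarrow> 'a set"
  for V E B where
  base: "b \<in> B \<Longrightarrow> b \<in> zf_closure V E B"
| force: "\<lbrakk>u \<in> zf_closure V E B; v \<in> V; E u v;
           \<forall>x \<in> V. E u x \<and> x \<noteq> v \<longrightarrow> x \<in> zf_closure V E B\<rbrakk> \<Longrightarrow> v \<in> zf_closure V E B"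

definition is_zfs :: "'a set \<Rightarrow> ('a \<Rightarrow> 'a \<Rightarrow> bool) \<Rightarrow> 'a set \<Rightarrow> bool" where
  "is_zfs V E B \<longleftrightarrow> B \<subseteq> V \<and> V \<subseteq> zf_closure V E B"

definition zf_number :: "'a set \<Rightarrow> ('a \<Rightarrow> 'a \<Rightarrow> bool) \<Rightarrow> nat" where
  "zf_number V E = Min (card ` {B. is_zfs V E B})"

definition eptw_graph :: "'a set \<Rightarrow> ('a \<Rightarrow> 'a \<Rightarrow> bool) \<Rightarrow> ('a \<Rightarrow> 'a \<Rightarrow> real) \<Rightarrow> real" where
  "eptw_graph V E W = Min (eptw_set V E W ` {B. is_zfs V E B \<and> card B = zf_number V E})"

definition path_V :: "nat \<Rightarrow> nat set" where "path_V n = {..<n}"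
definition path_E :: "nat \<Rightarrow> nat \<Rightarrow> nat \<Rightarrow> bool" where
  "path_E n u v \<longleftrightarrow> u < n \<and> v < n \<and> (v = u + 1 \<or> u = v + 1)"
definition path_W :: "(nat \<Rightarrow> real) \<Rightarrow> nat \<Rightarrow> nat \<Rightarrow> real" where
  "path_W w u v = (if v = u + 1 then w u else if u = v + 1 then w v else 0)"

text \<open>E_n(w_0,...,w_(n-2)) = eptw(path, {first, last}).\<close>
definition E_path :: "nat \<Rightarrow> (nat \<Rightarrow> real) \<Rightarrow> real" where
  "E_path n w = eptw_set (path_V n) (path_E n) (path_W w) {0, n - 1}"

definition cyc_V :: "nat \<Rightarrow> nat set" where "cyc_V n = {..<n}"
definition cyc_E :: "nat \<Rightarrow> nat \<Rightarrow> nat \<Rightarrow> bool" where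
  "cyc_E n u v \<longleftrightarrow> u < n \<and> v < n \<and> u \<noteq> v \<and> (v = (u + 1) mod n \<or> u = (v + 1) mod n)"
definition cyc_W :: "nat \<Rightarrow> (nat \<Rightarrow> real) \<Rightarrow> nat \<Rightarrow> nat \<Rightarrow> real" where
  "cyc_W n c u v = (if v = (u + 1) mod n then c u else if u = (v + 1) mod n then c v else 0)"

end

theory Submission
  imports Defs
begin


lemma state_Suc':
  "wzf_state V E W B (Suc k) = bind_pmf (wzf_step V E W B) (\<lambda>B'. wzf_state V E W B' k)"
proof (induction k)
  case 0
  then show ?case by (simp add: bind_return_pmf bind_return_pmf')
next
  case (Suc k)
  have "wzf_state V E W B (Suc (Suc k)) = bind_pmf (wzf_state V E W B (Suc k)) (wzf_step V E W)" by simp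
  also have "\<dots> = bind_pmf (bind_pmf (wzf_step V E W B) (\<lambda>B'. wzf_state V E W B' k)) (wzf_step V E W)"
    by (simp only: Suc)
  also have "\<dots> = bind_pmf (wzf_step V E W B) (\<lambda>B'. wzf_state V E W B' (Suc k))"
    by (simp add: bind_assoc_pmf)
  finally show ?case .
qed

lemma step_empty:
  assumes "forcing_pairs V E B = {}"
  shows "wzf_step V E W B = return_pmf B"
  using assms by (simp add: wzf_step_def map_pmf_def bind_return_pmf)

lemma state_fix:
  assumes "forcing_pairs V E B = {}"
  shows "wzf_state V E W B k = return_pmf B"
  by (induction k) (simp_all add: step_empty[OF assms] bind_return_pmf)

lemma step_two:
  assumes F: "forcing_pairs V E B = {(u1,v1),(u2,v2)}" and ne: "(u1,v1) \<noteq> (u2,v2)"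
  shows "wzf_step V E W B = bind_pmf (bernoulli_pmf (W u1 v1)) (\<lambda>s. bind_pmf (bernoulli_pmf (W u2 v2))
           (\<lambda>t. return_pmf (B \<union> {x. (x = v1 \<and> s) \<or> (x = v2 \<and> t)})))"
proof -
  let ?P = "(\<lambda>(u, v). bernoulli_pmf (W u v))"
  have "Pi_pmf {(u1,v1),(u2,v2)} False ?P =
     bind_pmf (?P (u1,v1)) (\<lambda>s. bind_pmf (Pi_pmf {(u2,v2)} False ?P) (\<lambda>f. return_pmf (f((u1,v1) := s))))"
    using ne by (subst Pi_pmf_insert') auto
  also have "Pi_pmf {(u2,v2)} False ?P = bind_pmf (?P (u2,v2)) (\<lambda>t. return_pmf ((\<lambda>_. False)((u2,v2) := t)))"
    by (subst Pi_pmf_insert') (auto simp: bind_return_pmf)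
  finally have PI: "Pi_pmf {(u1,v1),(u2,v2)} False ?P = bind_pmf (bernoulli_pmf (W u1 v1)) (\<lambda>s. bind_pmf (bernoulli_pmf (W u2 v2))
           (\<lambda>t. return_pmf ((\<lambda>_. False)((u2,v2) := t, (u1,v1) := s))))"
    apply (simp add: bind_assoc_pmf bind_return_pmf)
    apply (intro bind_pmf_cong refl)
    by (auto simp: fun_eq_iff)
  show ?thesis
    unfolding wzf_step_def F PI
    apply (simp add: map_bind_pmf)
    apply (intro bind_pmf_cong refl)
    using ne by auto
qed

lemma pmf_bind_bernoulli:
  assumes "0 \<le> p" "p \<le> 1"
  shows "pmf (bind_pmf (bernoulli_pmf p) f) x = p * pmf (f True) x + (1 - p) * pmf (f False) x"
  using assms by (simp add: pmf_bind)

lemma ptw_gt_two: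
  assumes F: "forcing_pairs V E B = {(u1,v1),(u2,v2)}" and ne: "(u1,v1) \<noteq> (u2,v2)"
    and p: "0 \<le> W u1 v1" "W u1 v1 \<le> 1" and q: "0 \<le> W u2 v2" "W u2 v2 \<le> 1"
  shows "ptw_gt V E W B (Suc k) =
     W u1 v1 * W u2 v2 * ptw_gt V E W (B \<union> {v1, v2}) k
   + W u1 v1 * (1 - W u2 v2) * ptw_gt V E W (B \<union> {v1}) k
   + (1 - W u1 v1) * W u2 v2 * ptw_gt V E W (B \<union> {v2}) k
   + (1 - W u1 v1) * (1 - W u2 v2) * ptw_gt V E W B k"
proof -
  have S: "wzf_state V E W B (Suc k) = bind_pmf (bernoulli_pmf (W u1 v1)) (\<lambda>s. bind_pmf (bernoulli_pmf (W u2 v2))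
           (\<lambda>t. wzf_state V E W (B \<union> {x. (x = v1 \<and> s) \<or> (x = v2 \<and> t)}) k))"
    by (simp only: state_Suc' step_two[OF F ne] bind_assoc_pmf bind_return_pmf)
  have e1: "{x. (x = v1 \<and> True) \<or> (x = v2 \<and> True)} = {v1,v2}" by auto
  have e2: "{x. (x = v1 \<and> True) \<or> (x = v2 \<and> False)} = {v1}" by auto
  have e3: "{x. (x = v1 \<and> False) \<or> (x = v2 \<and> True)} = {v2}" by auto
  have e5: "{x. x = v1 \<or> x = v2} = {v1,v2}" by auto
  have e4: "{x. (x = v1 \<and> False) \<or> (x = v2 \<and> False)} = {}" by auto
  show ?thesis
    unfolding ptw_gt_def S
    using p q by (simp add: pmf_bind_bernoulli e1 e2 e3 e4 e5 algebra_simps)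
qed




definition rec_ok :: "(nat \<Rightarrow> real) \<Rightarrow> (nat \<Rightarrow> nat \<Rightarrow> nat \<Rightarrow> real) \<Rightarrow> nat \<Rightarrow> bool" where
"rec_ok w G n \<longleftrightarrow> (\<forall>a b k. b < n \<longrightarrow> b \<le> a+1 \<longrightarrow> G a b k = 0) \<and>
   (\<forall>a b. b < n \<longrightarrow> a+2 \<le> b \<longrightarrow> G a b 0 = 1) \<and>
   (\<forall>a b k. b < n \<longrightarrow> a+2 \<le> b \<longrightarrow> G a b (Suc k) =
      w a * w (b-1) * G (a+1) (b-1) k + w a * (1 - w (b-1)) * G (a+1) b k
    + (1 - w a) * w (b-1) * G a (b-1) k + (1 - w a) * (1 - w (b-1)) * G a b k)"

lemma rec_unique:
  assumes "rec_ok w G1 n" "rec_ok w G2 m"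
  shows "b < n \<Longrightarrow> b < m \<Longrightarrow> G1 a b k = G2 a b k"
proof (induction k arbitrary: a b)
  case 0
  then show ?case using assms unfolding rec_ok_def
    by (cases "b \<le> a+1") auto
next
  case (Suc k)
  show ?case
  proof (cases "b \<le> a+1")
    case True
    then show ?thesis using assms Suc.prems unfolding rec_ok_def by auto
  next
    case False
    then have ab: "a+2 \<le> b" by auto
    have r1: "G1 a b (Suc k) =
      w a * w (b-1) * G1 (a+1) (b-1) k + w a * (1 - w (b-1)) * G1 (a+1) b k
    + (1 - w a) * w (b-1) * G1 a (b-1) k + (1 - w a) * (1 - w (b-1)) * G1 a b k"
      using assms(1) Suc.prems ab unfolding rec_ok_def by blast
    have r2: "G2 a b (Suc k) =
      w a * w (b-1) * G2 (a+1) (b-1) k + w a * (1 - w (b-1)) * G2 (a+1) b k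
    + (1 - w a) * w (b-1) * G2 a (b-1) k + (1 - w a) * (1 - w (b-1)) * G2 a b k"
      using assms(2) Suc.prems ab unfolding rec_ok_def by blast
    show ?thesis unfolding r1 r2 using Suc by simp
  qed
qed

lemma rec_mono: "rec_ok w G n \<Longrightarrow> m \<le> n \<Longrightarrow> rec_ok w G m"
  unfolding rec_ok_def by auto

lemma rec_shift: assumes "rec_ok w G n"
  shows "rec_ok (\<lambda>i. w (i+1)) (\<lambda>a b k. G (a+1) (b+1) k) (n-1)"
  unfolding rec_ok_def
proof (intro conjI allI impI)
  fix a b k assume "b < n-1" "b \<le> a+1"
  then show "G (a+1) (b+1) k = 0" using assms unfolding rec_ok_def by auto
next
  fix a b assume "b < n-1" "a+2 \<le> b"
  then show "G (a+1) (b+1) 0 = 1" using assms unfolding rec_ok_def by auto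
next
  fix a b k assume h: "b < n-1" "a+2 \<le> b"
  have R3: "\<forall>a b k. b < n \<longrightarrow> a+2 \<le> b \<longrightarrow> G a b (Suc k) =
      w a * w (b-1) * G (a+1) (b-1) k + w a * (1 - w (b-1)) * G (a+1) b k
    + (1 - w a) * w (b-1) * G a (b-1) k + (1 - w a) * (1 - w (b-1)) * G a b k"
    using assms unfolding rec_ok_def by blast
  have h2: "b+1 < n" "a+1+2 \<le> b+1" using h by auto
  have e: "b+1-1 = b - 1 + 1" using h by auto
  show "G (a+1) (b+1) (Suc k) = w (a+1) * w (b-1+1) * G (a+1+1) (b-1+1) k + w (a+1) * (1 - w (b-1+1)) * G (a+1+1) (b+1) k
    + (1 - w (a+1)) * w (b-1+1) * G (a+1) (b-1+1) k + (1 - w (a+1)) * (1 - w (b-1+1)) * G (a+1) (b+1) k"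
    using R3[rule_format, OF h2] unfolding e .
qed

lemma rec_nonneg:
  assumes "rec_ok w G n" "\<forall>i<n-1. 0 \<le> w i \<and> w i \<le> 1"
  shows "b < n \<Longrightarrow> 0 \<le> G a b k"
proof (induction k arbitrary: a b)
  case 0
  then show ?case using assms unfolding rec_ok_def by (cases "b \<le> a+1") auto
next
  case (Suc k)
  show ?case
  proof (cases "b \<le> a+1")
    case True
    then show ?thesis using assms Suc.prems unfolding rec_ok_def by auto
  next
    case False
    then have ab: "a+2 \<le> b" by auto
    have r1: "G a b (Suc k) =
      w a * w (b-1) * G (a+1) (b-1) k + w a * (1 - w (b-1)) * G (a+1) b k
    + (1 - w a) * w (b-1) * G a (b-1) k + (1 - w a) * (1 - w (b-1)) * G a b k"
      using assms(1) Suc.prems ab unfolding rec_ok_def by blast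
    have wa: "0 \<le> w a" "w a \<le> 1" "0 \<le> w (b-1)" "w (b-1) \<le> 1" using assms(2) Suc.prems ab by auto
    have g: "0 \<le> G (a+1) (b-1) k" "0 \<le> G (a+1) b k" "0 \<le> G a (b-1) k" "0 \<le> G a b k"
      using Suc by auto
    show ?thesis unfolding r1 using wa g by (intro add_nonneg_nonneg mult_nonneg_nonneg) auto
  qed
qed

lemma summable_rec:
  fixes f c :: "nat \<Rightarrow> real"
  assumes f0: "\<And>k. 0 \<le> f k" and c0: "\<And>k. 0 \<le> c k" and q: "0 \<le> q" "q < 1" and c: "summable c"
    and r: "\<And>k. f (Suc k) \<le> q * f k + c k"
  shows "summable f"
proof (rule summableI_nonneg_bounded[where x = "(f 0 + suminf c) / (1 - q)"])
  show "0 \<le> f k" for k by (rule f0)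
  have bnd: "(\<Sum>i<Suc N. f i) \<le> (f 0 + suminf c) / (1 - q)" for N
  proof -
    have "(\<Sum>i<Suc N. f i) = f 0 + (\<Sum>i<N. f (Suc i))" by (rule sum.lessThan_Suc_shift)
    also have "\<dots> \<le> f 0 + (\<Sum>i<N. q * f i + c i)" by (intro add_left_mono sum_mono r)
    also have "\<dots> = f 0 + q * (\<Sum>i<N. f i) + (\<Sum>i<N. c i)" by (simp add: sum.distrib sum_distrib_left)
    also have "(\<Sum>i<N. c i) \<le> suminf c" using c c0 by (intro sum_le_suminf) auto
    also have "q * (\<Sum>i<N. f i) \<le> q * (\<Sum>i<Suc N. f i)" using q f0 by (intro mult_left_mono) auto
    finally have "(1 - q) * (\<Sum>i<Suc N. f i) \<le> f 0 + suminf c" by (simp add: algebra_simps)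
    then show ?thesis using q by (simp add: field_simps)
  qed
  fix n show "(\<Sum>i<n. f i) \<le> (f 0 + suminf c) / (1 - q)"
  proof -
    have "(\<Sum>i<n. f i) \<le> (\<Sum>i<Suc n. f i)" using f0 by simp
    then show ?thesis using bnd[of n] by linarith
  qed
qed

lemma rec_summable:
  assumes R: "rec_ok w G n" and W: "\<forall>i<n-1. 0 < w i \<and> w i < 1"
  shows "b < n \<Longrightarrow> b - a = d \<Longrightarrow> summable (G a b)"
proof (induction d arbitrary: a b rule: less_induct)
  case (less d)
  have W': "\<forall>i<n-1. 0 \<le> w i \<and> w i \<le> 1" using W by (simp add: less_imp_le)
  show ?case
  proof (cases "b \<le> a+1")
    case True
    then have "G a b = (\<lambda>k. 0)" using R less.prems unfolding rec_ok_def by auto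
    then show ?thesis by simp
  next
    case False
    then have ab: "a+2 \<le> b" by auto
    have wa: "0 < w a" "w a < 1" "0 < w (b-1)" "w (b-1) < 1" using W less.prems ab by auto
    let ?q = "(1 - w a) * (1 - w (b-1))"
    let ?c = "\<lambda>k. w a * w (b-1) * G (a+1) (b-1) k + w a * (1 - w (b-1)) * G (a+1) b k
    + (1 - w a) * w (b-1) * G a (b-1) k"
    have s1: "summable (G (a+1) (b-1))" "summable (G (a+1) b)" "summable (G a (b-1))"
    proof -
      have d1: "b-1-(a+1) < d" "b-(a+1) < d" "b-1-a < d" "b - 1 < n" using less.prems ab by auto
      show "summable (G (a+1) (b-1))" by (rule less.IH[OF d1(1) d1(4) refl])
      show "summable (G (a+1) b)" by (rule less.IH[OF d1(2) less.prems(1) refl])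
      show "summable (G a (b-1))" by (rule less.IH[OF d1(3) d1(4) refl])
    qed
    have c1: "summable ?c" using s1 by (intro summable_add summable_mult)
    have c2: "0 \<le> ?c k" for k
    proof -
      have "0 \<le> G (a+1) (b-1) k" "0 \<le> G (a+1) b k" "0 \<le> G a (b-1) k"
        using rec_nonneg[OF R W'] less.prems ab by auto
      then show ?thesis using wa by (intro add_nonneg_nonneg mult_nonneg_nonneg) auto
    qed
    have R3: "\<forall>a b k. b < n \<longrightarrow> a+2 \<le> b \<longrightarrow> G a b (Suc k) =
      w a * w (b-1) * G (a+1) (b-1) k + w a * (1 - w (b-1)) * G (a+1) b k
    + (1 - w a) * w (b-1) * G a (b-1) k + (1 - w a) * (1 - w (b-1)) * G a b k"
      using R unfolding rec_ok_def by blast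
    have c3: "G a b (Suc k) \<le> ?q * G a b k + ?c k" for k
      using R3[rule_format, OF less.prems(1) ab, of k] by simp
    have q0: "0 \<le> ?q" using wa by (auto intro: mult_nonneg_nonneg)
    have "?q \<le> (1 - w a) * 1" using wa by (intro mult_left_mono) auto
    then have "?q \<le> 1 - w a" by simp
    then have q1: "?q < 1" using wa by linarith
    have f0: "0 \<le> G a b k" for k using rec_nonneg[OF R W' less.prems(1)] .
    show ?thesis by (rule summable_rec[OF f0 c2 q0 q1 c1 c3])
  qed
qed

lemma rec_sum:
  assumes R: "rec_ok w G n" and W: "\<forall>i<n-1. 0 < w i \<and> w i < 1" and b: "b < n" "a + 2 \<le> b"
  shows "suminf (G a b) * (w a + w (b-1) - w a * w (b-1)) =
     1 + w a * w (b-1) * suminf (G (a+1) (b-1)) + w a * (1 - w (b-1)) * suminf (G (a+1) b)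
    + (1 - w a) * w (b-1) * suminf (G a (b-1))"
proof -
  have s: "summable (G (a+1) (b-1))" "summable (G (a+1) b)" "summable (G a (b-1))" "summable (G a b)"
  proof -
    have "b - 1 < n" using b by auto
    then show "summable (G (a+1) (b-1))" "summable (G a (b-1))"
      by (rule rec_summable[OF R W _ refl])+
    show "summable (G (a+1) b)" "summable (G a b)"
      by (rule rec_summable[OF R W b(1) refl])+
  qed
  have R3: "\<forall>a b k. b < n \<longrightarrow> a+2 \<le> b \<longrightarrow> G a b (Suc k) =
      w a * w (b-1) * G (a+1) (b-1) k + w a * (1 - w (b-1)) * G (a+1) b k
    + (1 - w a) * w (b-1) * G a (b-1) k + (1 - w a) * (1 - w (b-1)) * G a b k"
    using R unfolding rec_ok_def by blast
  have eq: "(\<lambda>k. G a b (Suc k)) = (\<lambda>k. w a * w (b-1) * G (a+1) (b-1) k + w a * (1 - w (b-1)) * G (a+1) b k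
    + (1 - w a) * w (b-1) * G a (b-1) k + (1 - w a) * (1 - w (b-1)) * G a b k)"
  proof (rule ext)
    fix k show "G a b (Suc k) = w a * w (b-1) * G (a+1) (b-1) k + w a * (1 - w (b-1)) * G (a+1) b k
    + (1 - w a) * w (b-1) * G a (b-1) k + (1 - w a) * (1 - w (b-1)) * G a b k"
      using R3[rule_format, OF b] .
  qed
  let ?A = "w a * w (b-1)" and ?B = "w a * (1 - w (b-1))" and ?C = "(1 - w a) * w (b-1)"
    and ?D = "(1 - w a) * (1 - w (b-1))"
  have "suminf (G a b) = G a b 0 + (\<Sum>k. G a b (Suc k))"
    using suminf_split_head[OF s(4)] by linarith
  moreover have "G a b 0 = 1" using R b unfolding rec_ok_def by blast
  moreover have "(\<lambda>k. G a b (Suc k)) sums (?A * suminf (G (a+1) (b-1)) + ?B * suminf (G (a+1) b)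
      + ?C * suminf (G a (b-1)) + ?D * suminf (G a b))"
    unfolding eq by (intro sums_add sums_mult summable_sums s)
  ultimately have S: "suminf (G a b) = 1 + (?A * suminf (G (a+1) (b-1)) + ?B * suminf (G (a+1) b)
      + ?C * suminf (G a (b-1)) + ?D * suminf (G a b))"
    using sums_unique by fastforce
  have "suminf (G a b) * (w a + w (b-1) - w a * w (b-1)) = suminf (G a b) - ?D * suminf (G a b)"
    by (simp add: algebra_simps)
  then show ?thesis using S by linarith
qed




definition Sp :: "nat \<Rightarrow> nat \<Rightarrow> nat \<Rightarrow> nat set" where
  "Sp n a b = {x. x < n \<and> (x \<le> a \<or> b \<le> x)}"

definition Gp :: "nat \<Rightarrow> (nat \<Rightarrow> real) \<Rightarrow> nat \<Rightarrow> nat \<Rightarrow> nat \<Rightarrow> real" where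
  "Gp n w a b k = ptw_gt (path_V n) (path_E n) (path_W w) (Sp n a b) k"

lemma fp_full: "forcing_pairs V E V = {}"
  by (auto simp: forcing_pairs_def)

lemma ptw_gt_full: "ptw_gt V E W V k = 0"
  by (simp add: ptw_gt_def state_fix[OF fp_full])

lemma ptw_gt_0: "B \<noteq> V \<Longrightarrow> ptw_gt V E W B 0 = 1"
  by (simp add: ptw_gt_def)

lemma path_fp:
  assumes "a+2 \<le> b" "b < n"
  shows "forcing_pairs (path_V n) (path_E n) (Sp n a b) = {(a,a+1),(b,b-1)}"
proof (intro equalityI subsetI)
  fix p assume "p \<in> forcing_pairs (path_V n) (path_E n) (Sp n a b)"
  then obtain u v where p: "p = (u,v)" and u: "u \<in> Sp n a b" and v: "v \<in> path_V n - Sp n a b"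
    and e: "path_E n u v" unfolding forcing_pairs_def by blast
  have "u < n" "u \<le> a \<or> b \<le> u" using u by (auto simp: Sp_def)
  moreover have "v < n" "a < v" "v < b" using v by (auto simp: Sp_def path_V_def)
  moreover have "v = u + 1 \<or> u = v + 1" using e by (auto simp: path_E_def)
  ultimately have "(u = a \<and> v = a+1) \<or> (u = b \<and> v = b - 1)" by linarith
  then show "p \<in> {(a,a+1),(b,b-1)}" using p by auto
next
  fix p assume "p \<in> {(a,a+1),(b,b-1)}"
  then show "p \<in> forcing_pairs (path_V n) (path_E n) (Sp n a b)"
  proof
    assume p: "p = (a, a+1)"
    show ?thesis unfolding p forcing_pairs_def using assms
      by (auto simp: Sp_def path_V_def path_E_def)
  next
    assume "p \<in> {(b, b-1)}"
    then have p: "p = (b, b-1)" by simp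
    show ?thesis unfolding p forcing_pairs_def using assms
      by (auto simp: Sp_def path_V_def path_E_def)
  qed
qed

lemma rec_path:
  assumes W: "\<forall>i<n-1. 0 \<le> w i \<and> w i \<le> 1"
  shows "rec_ok w (Gp n w) n"
  unfolding rec_ok_def
proof (intro conjI allI impI)
  fix a b k assume "b < n" "b \<le> a+1"
  then have "Sp n a b = path_V n" by (auto simp: Sp_def path_V_def)
  then show "Gp n w a b k = 0" by (simp add: Gp_def ptw_gt_full)
next
  fix a b assume h: "b < n" "a+2 \<le> b"
  then have "a+1 \<in> path_V n" "a+1 \<notin> Sp n a b" by (auto simp: Sp_def path_V_def)
  then have "Sp n a b \<noteq> path_V n" by blast
  then show "Gp n w a b 0 = 1" by (simp add: Gp_def ptw_gt_0)
next
  fix a b k assume h: "b < n" "a+2 \<le> b"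
  have w1: "path_W w a (a+1) = w a" by (simp add: path_W_def)
  have w2: "path_W w b (b-1) = w (b-1)" using h by (auto simp: path_W_def)
  have wr: "0 \<le> w a" "w a \<le> 1" "0 \<le> w (b-1)" "w (b-1) \<le> 1" using W h by auto
  have ne: "(a, a+1) \<noteq> (b, b-1)" using h by auto
  have s1: "Sp n a b \<union> {a+1, b-1} = Sp n (a+1) (b-1)" using h by (auto simp: Sp_def)
  have s2: "Sp n a b \<union> {a+1} = Sp n (a+1) b" using h by (auto simp: Sp_def)
  have s3: "Sp n a b \<union> {b-1} = Sp n a (b-1)" using h by (auto simp: Sp_def)
  show "Gp n w a b (Suc k) =
      w a * w (b-1) * Gp n w (a+1) (b-1) k + w a * (1 - w (b-1)) * Gp n w (a+1) b k
    + (1 - w a) * w (b-1) * Gp n w a (b-1) k + (1 - w a) * (1 - w (b-1)) * Gp n w a b k"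
    unfolding Gp_def
    using ptw_gt_two[OF path_fp[OF h(2) h(1)] ne, of "path_W w" k] wr
    unfolding w1 w2 s1 s2 s3 by simp
qed

lemma Sp_0: "1 \<le> n \<Longrightarrow> Sp n 0 (n-1) = {0, n-1}"
  by (auto simp: Sp_def)

lemma E_path_Gp: "1 \<le> n \<Longrightarrow> E_path n w = suminf (Gp n w 0 (n-1))"
  unfolding E_path_def Gp_def[abs_def] Sp_0[symmetric] by (simp add: eptw_set_def)




lemma denom_pos: "0 < (x::real) \<Longrightarrow> x < 1 \<Longrightarrow> 0 < y \<Longrightarrow> y < 1 \<Longrightarrow> 0 < x + y - x * y"
proof -
  assume h: "0 < x" "x < 1" "0 < y" "y < 1"
  have "x * y < x * 1" using h mult_strict_left_mono[of y 1 x] by simp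
  then have "x * y < x" by simp
  then show ?thesis using h by linarith
qed

lemma rec_zero: "rec_ok w G n \<Longrightarrow> b < n \<Longrightarrow> b \<le> a + 1 \<Longrightarrow> suminf (G a b) = 0"
proof -
  assume "rec_ok w G n" "b < n" "b \<le> a + 1"
  then have "G a b = (\<lambda>_. 0)" by (intro ext) (auto simp: rec_ok_def)
  then show ?thesis by simp
qed

lemma part1:
  assumes W: "\<forall>i<2. 0 < w i \<and> w i < 1"
  shows "E_path 3 w = 1 / (w 0 + w 1 - w 0 * w 1)"
proof -
  have W': "\<forall>i<3-1. 0 < w i \<and> w i < 1" using W by simp
  have R: "rec_ok w (Gp 3 w) 3" by (rule rec_path) (use W in auto)
  have "suminf (Gp 3 w 0 2) * (w 0 + w (2-1) - w 0 * w (2-1)) =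
     1 + w 0 * w (2-1) * suminf (Gp 3 w (0+1) (2-1)) + w 0 * (1 - w (2-1)) * suminf (Gp 3 w (0+1) 2)
    + (1 - w 0) * w (2-1) * suminf (Gp 3 w 0 (2-1))"
    by (rule rec_sum[OF R W']) auto
  moreover have "suminf (Gp 3 w (0+1) (2-1)) = 0" "suminf (Gp 3 w (0+1) 2) = 0" "suminf (Gp 3 w 0 (2-1)) = 0"
    by (rule rec_zero[OF R]; simp)+
  ultimately have "suminf (Gp 3 w 0 2) * (w 0 + w 1 - w 0 * w 1) = 1" by simp
  moreover have "0 < w 0 + w 1 - w 0 * w 1" using W by (intro denom_pos) auto
  moreover have "E_path 3 w = suminf (Gp 3 w 0 2)" using E_path_Gp[of 3 w] by simp
  ultimately show ?thesis by (simp add: field_simps)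
qed

lemma part2:
  assumes n: "4 \<le> n" and W: "\<forall>i<n - 1. 0 < w i \<and> w i < 1"
  shows "E_path n w =
          (1 + w 0 * (1 - w (n - 2)) * E_path (n - 1) (\<lambda>i. w (i + 1))
             + (1 - w 0) * w (n - 2) * E_path (n - 1) w
             + w 0 * w (n - 2) * E_path (n - 2) (\<lambda>i. w (i + 1)))
          / (w 0 + w (n - 2) - w 0 * w (n - 2))"
proof -
  have R: "rec_ok w (Gp n w) n" by (rule rec_path) (use W in auto)
  have Wa: "\<forall>i<n-1-1. 0 \<le> w (i+1) \<and> w (i+1) \<le> 1"
  proof (intro allI impI)
    fix i assume "i < n-1-1" then have "i+1 < n-1" by arith
    then show "0 \<le> w (i+1) \<and> w (i+1) \<le> 1" using W by (meson less_imp_le)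
  qed
  have Wb: "\<forall>i<n-2-1. 0 \<le> w (i+1) \<and> w (i+1) \<le> 1"
  proof (intro allI impI)
    fix i assume "i < n-2-1" then have "i+1 < n-1" by arith
    then show "0 \<le> w (i+1) \<and> w (i+1) \<le> 1" using W by (meson less_imp_le)
  qed
  have Rs: "rec_ok (\<lambda>i. w (i+1)) (\<lambda>a b k. Gp n w (a+1) (b+1) k) (n-1)" by (rule rec_shift[OF R])
  have R1: "rec_ok (\<lambda>i. w (i+1)) (Gp (n-1) (\<lambda>i. w (i+1))) (n-1)" by (rule rec_path[OF Wa])
  have Wc: "\<forall>i<n-1-1. 0 \<le> w i \<and> w i \<le> 1"
  proof (intro allI impI)
    fix i assume "i < n-1-1" then have "i < n-1" by arith
    then show "0 \<le> w i \<and> w i \<le> 1" using W by (meson less_imp_le)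
  qed
  have R2: "rec_ok w (Gp (n-1) w) (n-1)" by (rule rec_path[OF Wc])
  have R3: "rec_ok (\<lambda>i. w (i+1)) (Gp (n-2) (\<lambda>i. w (i+1))) (n-2)" by (rule rec_path[OF Wb])
  have e1: "Gp (n-1) (\<lambda>i. w (i+1)) 0 (n-2) = Gp n w 1 (n-1)"
  proof
    fix k
    have "Gp (n-1) (\<lambda>i. w (i+1)) 0 (n-2) k = Gp n w (0+1) (n-2+1) k"
      by (rule rec_unique[OF R1 Rs]) (use n in auto)
    moreover have "n-2+1 = n-1" using n by auto
    ultimately show "Gp (n-1) (\<lambda>i. w (i+1)) 0 (n-2) k = Gp n w 1 (n-1) k" by simp
  qed
  have e2: "Gp (n-1) w 0 (n-2) = Gp n w 0 (n-2)"
  proof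
    fix k show "Gp (n-1) w 0 (n-2) k = Gp n w 0 (n-2) k"
      by (rule rec_unique[OF R2 R]) (use n in auto)
  qed
  have e3: "Gp (n-2) (\<lambda>i. w (i+1)) 0 (n-3) = Gp n w 1 (n-2)"
  proof
    fix k
    have "Gp (n-2) (\<lambda>i. w (i+1)) 0 (n-3) k = Gp n w (0+1) (n-3+1) k"
      by (rule rec_unique[OF R3 Rs]) (use n in auto)
    moreover have "n-3+1 = n-2" using n by auto
    ultimately show "Gp (n-2) (\<lambda>i. w (i+1)) 0 (n-3) k = Gp n w 1 (n-2) k" by simp
  qed
  have E1: "E_path (n - 1) (\<lambda>i. w (i + 1)) = suminf (Gp n w 1 (n-1))"
    using E_path_Gp[of "n-1" "\<lambda>i. w (i + 1)"] e1 n by (simp add: numeral_eq_Suc)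
  have E2: "E_path (n - 1) w = suminf (Gp n w 0 (n-2))"
    using E_path_Gp[of "n-1" w] e2 n by (simp add: numeral_eq_Suc)
  have E3: "E_path (n - 2) (\<lambda>i. w (i + 1)) = suminf (Gp n w 1 (n-2))"
  proof -
    have "n - 2 - 1 = n - 3" by simp
    then show ?thesis using E_path_Gp[of "n-2" "\<lambda>i. w (i + 1)"] e3 n by simp
  qed
  have E0: "E_path n w = suminf (Gp n w 0 (n-1))" using E_path_Gp[of n w] n by simp
  have W': "\<forall>i<n-1. 0 < w i \<and> w i < 1" using W by simp
  have "suminf (Gp n w 0 (n-1)) * (w 0 + w (n-1-1) - w 0 * w (n-1-1)) =
     1 + w 0 * w (n-1-1) * suminf (Gp n w (0+1) (n-1-1)) + w 0 * (1 - w (n-1-1)) * suminf (Gp n w (0+1) (n-1))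
    + (1 - w 0) * w (n-1-1) * suminf (Gp n w 0 (n-1-1))"
    by (rule rec_sum[OF R W']) (use n in auto)
  moreover have "n-1-1 = n-2" by simp
  ultimately have X: "E_path n w * (w 0 + w (n-2) - w 0 * w (n-2)) =
     1 + w 0 * w (n-2) * E_path (n - 2) (\<lambda>i. w (i + 1)) + w 0 * (1 - w (n-2)) * E_path (n - 1) (\<lambda>i. w (i + 1))
    + (1 - w 0) * w (n-2) * E_path (n - 1) w"
    unfolding E0 E1 E2 E3 by simp
  have "0 < w 0 + w (n-2) - w 0 * w (n-2)" using W n by (intro denom_pos) auto
  then show ?thesis using X by (simp add: field_simps)
qed




definition phi :: "nat \<Rightarrow> nat \<Rightarrow> nat \<Rightarrow> nat" where
  "phi n j k = (j + 1 + k) mod n"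

lemma phi_eq: "j < n \<Longrightarrow> x < n \<Longrightarrow> phi n j x = (if j+1+x < n then j+1+x else j+1+x-n)"
proof -
  assume h: "j < n" "x < n"
  show ?thesis
  proof (cases "j+1+x < n")
    case True then show ?thesis by (simp add: phi_def)
  next
    case False
    then have "(j+1+x) mod n = (j+1+x-n) mod n" by (simp add: le_mod_geq)
    also have "\<dots> = j+1+x-n" using h False by (intro mod_less) arith
    finally show ?thesis using False by (simp add: phi_def)
  qed
qed

lemma mod_Suc_lt: "(u::nat) < n \<Longrightarrow> (u+1) mod n = (if u+1 = n then 0 else u+1)"
proof (cases "u+1 = n")
  case True
  then show ?thesis by (simp add: mod_self)
next
  case False
  assume "u < n"
  with False have "u + 1 < n" by simp
  then show ?thesis using False by simp
qed

lemma cycE_iff: "(u::nat) < n \<Longrightarrow> v < n \<Longrightarrow> cyc_E n u v \<longleftrightarrow>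
   u \<noteq> v \<and> (v = u+1 \<or> u = v+1 \<or> (u+1 = n \<and> v = 0) \<or> (v+1 = n \<and> u = 0))"
  unfolding cyc_E_def using mod_Suc_lt[of u n] mod_Suc_lt[of v n] by auto

lemma phi_lt: "j < n \<Longrightarrow> x < n \<Longrightarrow> phi n j x < n"
  by (simp add: phi_def)

lemma phi_inj: "j < n \<Longrightarrow> x < n \<Longrightarrow> y < n \<Longrightarrow> phi n j x = phi n j y \<longleftrightarrow> x = y"
  using phi_eq[of j n x] phi_eq[of j n y] by auto

lemma phi_surj: "j < n \<Longrightarrow> v < n \<Longrightarrow> \<exists>x<n. v = phi n j x"
proof -
  assume h: "j < n" "v < n"
  show ?thesis
  proof (cases "j + 1 \<le> v")
    case True
    then show ?thesis using h phi_eq[of j n "v - (j+1)"] by (intro exI[of _ "v - (j+1)"]) auto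
  next
    case False
    then show ?thesis using h phi_eq[of j n "v + n - (j+1)"] by (intro exI[of _ "v + n - (j+1)"]) auto
  qed
qed

lemma phi_image: "j < n \<Longrightarrow> phi n j ` {..<n} = {..<n}"
  using phi_lt phi_surj by fastforce

lemma phi_edge:
  assumes "3 \<le> n" "j < n" "x < n" "y < n"
  shows "cyc_E n (phi n j x) (phi n j y) \<longleftrightarrow> path_E n x y \<or> (x = 0 \<and> y = n-1) \<or> (x = n-1 \<and> y = 0)"
  unfolding cycE_iff[OF phi_lt[OF assms(2,3)] phi_lt[OF assms(2,4)]]
  unfolding phi_eq[OF assms(2,3)] phi_eq[OF assms(2,4)] path_E_def
  using assms by (simp split: if_splits; arith)



lemma phi_succ: "phi n j (x+1) = (phi n j x + 1) mod n"
  unfolding phi_def by (simp only: mod_add_left_eq add.assoc)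

lemma phi_mod: "phi n j (k mod n) = phi n j k"
  unfolding phi_def by (rule mod_add_right_eq)

lemma phi_weight:
  assumes "3 \<le> n" "j < n" "path_E n x y"
  shows "cyc_W n c (phi n j x) (phi n j y) = path_W (\<lambda>i. c (phi n j i)) x y"
proof -
  have xy: "x < n" "y < n" "y = x + 1 \<or> x = y + 1" using assms(3) by (auto simp: path_E_def)
  show ?thesis
  proof (cases "y = x + 1")
    case True
    have c1: "phi n j y = (phi n j x + 1) mod n" unfolding True by (rule phi_succ)
    have "cyc_W n c (phi n j x) (phi n j y) = c (phi n j x)" by (simp only: cyc_W_def if_P[OF c1])
    moreover have "path_W (\<lambda>i. c (phi n j i)) x y = c (phi n j x)" by (simp add: path_W_def True)
    ultimately show ?thesis by simp
  next
    case False
    then have yx: "x = y + 1" using xy by simp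
    have h2: "phi n j ((y+1)+1) = (phi n j (y+1) + 1) mod n" by (rule phi_succ)
    have h3: "(y+1)+1 = y+2" by simp
    have "(phi n j x + 1) mod n = phi n j (y+2)" unfolding yx using h2 unfolding h3 by (rule sym)
    also have "\<dots> = phi n j ((y+2) mod n)" by (rule phi_mod[symmetric])
    finally have e: "(phi n j x + 1) mod n = phi n j ((y+2) mod n)" .
    have "(y+2) mod n \<noteq> y"
    proof (cases "y + 2 < n")
      case True then show ?thesis by simp
    next
      case False
      then have "y + 2 = n" using xy yx by simp
      then have "(y+2) mod n = 0" by (simp add: mod_self)
      then show ?thesis using \<open>y+2 = n\<close> assms(1) by simp
    qed
    moreover have "(y+2) mod n < n" using assms(1) by simp
    ultimately have "phi n j y \<noteq> phi n j ((y+2) mod n)" using phi_inj[OF assms(2) xy(2), of "(y+2) mod n"] by simp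
    then have ne: "phi n j y \<noteq> (phi n j x + 1) mod n" unfolding e .
    have eq: "phi n j x = (phi n j y + 1) mod n" unfolding yx by (rule phi_succ)
    have "x \<noteq> x + 1" by simp
    have "cyc_W n c (phi n j x) (phi n j y) = c (phi n j y)" by (simp only: cyc_W_def if_not_P[OF ne] if_P[OF eq])
    moreover have "path_W (\<lambda>i. c (phi n j i)) x y = c (phi n j y)" by (simp add: path_W_def yx)
    ultimately show ?thesis by simp
  qed
qed

lemma phi_in_image: "j < n \<Longrightarrow> z < n \<Longrightarrow> S \<subseteq> {..<n} \<Longrightarrow> phi n j z \<in> phi n j ` S \<longleftrightarrow> z \<in> S"
proof
  assume h: "j < n" "z < n" "S \<subseteq> {..<n}" "phi n j z \<in> phi n j ` S"
  then obtain s where s: "s \<in> S" "phi n j z = phi n j s" by blast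
  then have "s < n" using h by auto
  then have "z = s" using phi_inj[OF h(1) h(2), of s] s by simp
  then show "z \<in> S" using s by simp
qed simp

lemma cyc_fp:
  assumes n: "3 \<le> n" "j < n" and S: "S \<subseteq> {..<n}" "0 \<in> S" "n-1 \<in> S"
  shows "forcing_pairs (cyc_V n) (cyc_E n) (phi n j ` S) =
     (\<lambda>(x,y). (phi n j x, phi n j y)) ` forcing_pairs (path_V n) (path_E n) S"
proof (intro equalityI subsetI)
  fix p assume "p \<in> forcing_pairs (cyc_V n) (cyc_E n) (phi n j ` S)"
  then obtain u v where p: "p = (u,v)" and u: "u \<in> phi n j ` S" and v: "v \<in> cyc_V n" "v \<notin> phi n j ` S"
    and e: "cyc_E n u v" and U: "\<forall>z \<in> cyc_V n - phi n j ` S. cyc_E n u z \<longrightarrow> z = v"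
    unfolding forcing_pairs_def by blast
  obtain x where x: "x \<in> S" "u = phi n j x" using u by blast
  have xn: "x < n" using x S by auto
  obtain y where y: "y < n" "v = phi n j y" using phi_surj[OF n(2)] v by (auto simp: cyc_V_def)
  have yS: "y \<notin> S" using v(2) y x by auto
  have pe: "path_E n x y" using e phi_edge[OF n xn y(1)] x y yS S by auto
  have U': "\<forall>z \<in> path_V n - S. path_E n x z \<longrightarrow> z = y"
  proof (intro ballI impI)
    fix z assume z: "z \<in> path_V n - S" "path_E n x z"
    have zn: "z < n" using z by (auto simp: path_V_def)
    have "cyc_E n u (phi n j z)" using x z phi_edge[OF n xn zn] by auto
    moreover have "phi n j z \<in> cyc_V n - phi n j ` S"
      using phi_lt[OF n(2) zn] phi_in_image[OF n(2) zn S(1)] z by (auto simp: cyc_V_def)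
    ultimately have "phi n j z = phi n j y" using U y by auto
    then show "z = y" using phi_inj[OF n(2) zn y(1)] by simp
  qed
  have yV: "y \<in> path_V n - S" using yS y by (simp add: path_V_def)
  have "(x,y) \<in> forcing_pairs (path_V n) (path_E n) S"
    unfolding forcing_pairs_def using x(1) yV pe U' by blast
  then show "p \<in> (\<lambda>(x,y). (phi n j x, phi n j y)) ` forcing_pairs (path_V n) (path_E n) S"
    using p x y by force
next
  fix p assume "p \<in> (\<lambda>(x,y). (phi n j x, phi n j y)) ` forcing_pairs (path_V n) (path_E n) S"
  then obtain x y where p: "p = (phi n j x, phi n j y)" and xy: "(x,y) \<in> forcing_pairs (path_V n) (path_E n) S"
    by auto
  then have x: "x \<in> S" and yV: "y \<in> path_V n - S" and e: "path_E n x y"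
    and U: "\<forall>z \<in> path_V n - S. path_E n x z \<longrightarrow> z = y"
    unfolding forcing_pairs_def by blast+
  have y: "y < n" "y \<notin> S" using yV by (auto simp: path_V_def)
  have xn: "x < n" using x S by auto
  have ce: "cyc_E n (phi n j x) (phi n j y)" using phi_edge[OF n xn y(1)] e by simp
  have yv: "phi n j y \<in> cyc_V n - phi n j ` S"
    using phi_lt[OF n(2) y(1)] phi_in_image[OF n(2) y(1) S(1)] y by (auto simp: cyc_V_def)
  have U': "\<forall>z \<in> cyc_V n - phi n j ` S. cyc_E n (phi n j x) z \<longrightarrow> z = phi n j y"
  proof (intro ballI impI)
    fix z assume z: "z \<in> cyc_V n - phi n j ` S" "cyc_E n (phi n j x) z"
    obtain z' where z': "z' < n" "z = phi n j z'" using phi_surj[OF n(2)] z by (auto simp: cyc_V_def)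
    have z'S: "z' \<notin> S" using z z' by auto
    have "path_E n x z'" using z(2) z' phi_edge[OF n xn z'(1)] z'S S by auto
    moreover have "z' \<in> path_V n - S" using z' z'S by (simp add: path_V_def)
    ultimately have "z' = y" using U by blast
    then show "z = phi n j y" using z' by simp
  qed
  show "p \<in> forcing_pairs (cyc_V n) (cyc_E n) (phi n j ` S)"
    unfolding p forcing_pairs_def using x ce yv U' by blast
qed

definition Gc :: "nat \<Rightarrow> (nat \<Rightarrow> real) \<Rightarrow> nat \<Rightarrow> nat \<Rightarrow> nat \<Rightarrow> nat \<Rightarrow> real" where
  "Gc n c j a b k = ptw_gt (cyc_V n) (cyc_E n) (cyc_W n c) (phi n j ` Sp n a b) k"

lemma rec_cyc:
  assumes n: "3 \<le> n" "j < n" and C: "\<forall>i<n. 0 \<le> c i \<and> c i \<le> 1"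
  shows "rec_ok (\<lambda>i. c (phi n j i)) (Gc n c j) n"
  unfolding rec_ok_def
proof (intro conjI allI impI)
  fix a b k assume "b < n" "b \<le> a+1"
  then have "Sp n a b = {..<n}" by (auto simp: Sp_def)
  then have "phi n j ` Sp n a b = cyc_V n" using phi_image[OF n(2)] by (simp add: cyc_V_def)
  then show "Gc n c j a b k = 0" by (simp add: Gc_def ptw_gt_full)
next
  fix a b assume h: "b < n" "a+2 \<le> b"
  have a1: "a + 1 < n" "a+1 \<notin> Sp n a b" "Sp n a b \<subseteq> {..<n}" using h by (auto simp: Sp_def)
  then have "phi n j (a+1) \<notin> phi n j ` Sp n a b" using phi_in_image[OF n(2)] by blast
  moreover have "phi n j (a+1) \<in> cyc_V n" using phi_lt[OF n(2) a1(1)] by (simp add: cyc_V_def)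
  ultimately have "phi n j ` Sp n a b \<noteq> cyc_V n" by blast
  then show "Gc n c j a b 0 = 1" by (simp add: Gc_def ptw_gt_0)
next
  fix a b k assume h: "b < n" "a+2 \<le> b"
  let ?f = "phi n j"
  let ?w = "\<lambda>i. c (phi n j i)"
  have Ssub: "Sp n a b \<subseteq> {..<n}" "0 \<in> Sp n a b" "n - 1 \<in> Sp n a b" using h by (auto simp: Sp_def)
  have fp: "forcing_pairs (cyc_V n) (cyc_E n) (?f ` Sp n a b) = {(?f a, ?f (a+1)), (?f b, ?f (b-1))}"
    unfolding cyc_fp[OF n Ssub] path_fp[OF h(2) h(1)] by simp
  have ab: "a < n" "b < n" "a \<noteq> b" using h by auto
  have ne: "(?f a, ?f (a+1)) \<noteq> (?f b, ?f (b-1))" using phi_inj[OF n(2) ab(1) ab(2)] ab by simp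
  have pe1: "path_E n a (a+1)" using h by (auto simp: path_E_def)
  have pe2: "path_E n b (b-1)" using h by (auto simp: path_E_def)
  have w1: "cyc_W n c (?f a) (?f (a+1)) = ?w a"
    using phi_weight[OF n pe1, of c] by (simp add: path_W_def)
  have w2: "cyc_W n c (?f b) (?f (b-1)) = ?w (b-1)"
    using phi_weight[OF n pe2, of c] h by (auto simp: path_W_def)
  have l: "?f a < n" "?f (b-1) < n" using phi_lt[OF n(2)] h by auto
  have wr: "0 \<le> ?w a" "?w a \<le> 1" "0 \<le> ?w (b-1)" "?w (b-1) \<le> 1" using C l by auto
  have s1: "Sp n a b \<union> {a+1, b-1} = Sp n (a+1) (b-1)" using h by (auto simp: Sp_def)
  have s2: "Sp n a b \<union> {a+1} = Sp n (a+1) b" using h by (auto simp: Sp_def)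
  have s3: "Sp n a b \<union> {b-1} = Sp n a (b-1)" using h by (auto simp: Sp_def)
  have i1: "?f ` Sp n a b \<union> {?f (a+1), ?f (b-1)} = ?f ` Sp n (a+1) (b-1)" unfolding s1[symmetric] by auto
  have i2: "?f ` Sp n a b \<union> {?f (a+1)} = ?f ` Sp n (a+1) b" unfolding s2[symmetric] by auto
  have i3: "?f ` Sp n a b \<union> {?f (b-1)} = ?f ` Sp n a (b-1)" unfolding s3[symmetric] by auto
  have "wr'": "0 \<le> cyc_W n c (?f a) (?f (a+1))" "cyc_W n c (?f a) (?f (a+1)) \<le> 1"
     "0 \<le> cyc_W n c (?f b) (?f (b-1))" "cyc_W n c (?f b) (?f (b-1)) \<le> 1" unfolding w1 w2 using wr by auto
  show "Gc n c j a b (Suc k) =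
      ?w a * ?w (b-1) * Gc n c j (a+1) (b-1) k + ?w a * (1 - ?w (b-1)) * Gc n c j (a+1) b k
    + (1 - ?w a) * ?w (b-1) * Gc n c j a (b-1) k + (1 - ?w a) * (1 - ?w (b-1)) * Gc n c j a b k"
    unfolding Gc_def
    using ptw_gt_two[OF fp ne "wr'", of k]
    unfolding w1 w2 i1 i2 i3 .
qed

lemma eptw_adj:
  assumes n: "3 \<le> n" "j < n" and C: "\<forall>i<n. 0 < c i \<and> c i < 1"
  shows "eptw_set (cyc_V n) (cyc_E n) (cyc_W n c) {j, (j+1) mod n} = E_path n (\<lambda>i. c ((j + 1 + i) mod n))"
proof -
  let ?w = "\<lambda>i. c (phi n j i)"
  have C': "\<forall>i<n. 0 \<le> c i \<and> c i \<le> 1" using C by (simp add: less_imp_le)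
  have R1: "rec_ok ?w (Gc n c j) n" by (rule rec_cyc[OF n C'])
  have W: "\<forall>i<n-1. 0 \<le> ?w i \<and> ?w i \<le> 1"
  proof (intro allI impI)
    fix i assume "i < n-1" then have "phi n j i < n" using phi_lt[OF n(2)] by simp
    then show "0 \<le> ?w i \<and> ?w i \<le> 1" using C' by blast
  qed
  have R2: "rec_ok ?w (Gp n ?w) n" by (rule rec_path[OF W])
  have eq: "Gc n c j 0 (n-1) = Gp n ?w 0 (n-1)"
  proof
    fix k show "Gc n c j 0 (n-1) k = Gp n ?w 0 (n-1) k" by (rule rec_unique[OF R1 R2]) (use n in auto)
  qed
  have "phi n j ` Sp n 0 (n-1) = {phi n j 0, phi n j (n-1)}" using Sp_0[of n] n by simp
  also have "phi n j 0 = (j+1) mod n" by (simp add: phi_def)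
  also have "phi n j (n-1) = j"
  proof -
    have "j + 1 + (n-1) = j + n" using n by simp
    then show ?thesis using n by (simp add: phi_def)
  qed
  finally have B: "{j, (j+1) mod n} = phi n j ` Sp n 0 (n-1)" by auto
  have "eptw_set (cyc_V n) (cyc_E n) (cyc_W n c) {j, (j+1) mod n} = suminf (Gc n c j 0 (n-1))"
    unfolding B eptw_set_def Gc_def ..
  also have "\<dots> = E_path n ?w" unfolding eq using E_path_Gp[of n ?w] n by simp
  also have "?w = (\<lambda>i. c ((j + 1 + i) mod n))" by (simp add: phi_def)
  finally show ?thesis .
qed

lemma closure_stuck:
  assumes "\<forall>u\<in>B. \<forall>v. \<exists>x\<in>V - B. E u x \<and> x \<noteq> v"
  shows "zf_closure V E B \<subseteq> B"
proof
  fix y assume "y \<in> zf_closure V E B"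
  then show "y \<in> B"
  proof (induction rule: zf_closure.induct)
    case (base b) then show ?case .
  next
    case (force u v)
    obtain x where "x \<in> V - B" "E u x" "x \<noteq> v" using assms force by blast
    then show ?case using force by blast
  qed
qed

lemma cyc_two_nbrs:
  assumes "3 \<le> n" "u < n"
  shows "\<exists>x1 x2. x1 < n \<and> x2 < n \<and> x1 \<noteq> x2 \<and> cyc_E n u x1 \<and> cyc_E n u x2"
proof -
  let ?x1 = "if u+1 = n then 0 else u+1" and ?x2 = "if u = 0 then n-1 else u-1"
  have l: "?x1 < n" "?x2 < n" using assms by auto
  have "?x1 \<noteq> ?x2" using assms by auto
  moreover have "cyc_E n u ?x1" unfolding cycE_iff[OF assms(2) l(1)] using assms by auto
  moreover have "cyc_E n u ?x2" unfolding cycE_iff[OF assms(2) l(2)] using assms by auto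
  ultimately show ?thesis using l by blast
qed

lemma cyc_indep_not_zfs:
  assumes n: "3 \<le> n" and B: "B \<subseteq> cyc_V n" and ind: "\<forall>u\<in>B. \<forall>x. cyc_E n u x \<longrightarrow> x \<notin> B"
    and c: "card B < n"
  shows "\<not> is_zfs (cyc_V n) (cyc_E n) B"
proof
  assume z: "is_zfs (cyc_V n) (cyc_E n) B"
  have "\<forall>u\<in>B. \<forall>v. \<exists>x\<in>cyc_V n - B. cyc_E n u x \<and> x \<noteq> v"
  proof (intro ballI allI)
    fix u v assume u: "u \<in> B"
    then have "u < n" using B by (auto simp: cyc_V_def)
    then obtain x1 x2 where x: "x1 < n" "x2 < n" "x1 \<noteq> x2" "cyc_E n u x1" "cyc_E n u x2"
      using cyc_two_nbrs[OF n] by blast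
    have "x1 \<notin> B" "x2 \<notin> B" using ind u x by auto
    then show "\<exists>x\<in>cyc_V n - B. cyc_E n u x \<and> x \<noteq> v"
      using x by (cases "x1 = v") (auto simp: cyc_V_def)
  qed
  then have "zf_closure (cyc_V n) (cyc_E n) B \<subseteq> B" by (rule closure_stuck)
  then have "cyc_V n \<subseteq> B" using z by (auto simp: is_zfs_def)
  then have "card (cyc_V n) \<le> card B" using B by (intro card_mono) (auto simp: cyc_V_def)
  then show False using c by (simp add: cyc_V_def)
qed

lemma cycE_sym: "cyc_E n u v \<Longrightarrow> cyc_E n v u"
  unfolding cyc_E_def by auto

lemma zfs_card:
  assumes n: "3 \<le> n" and z: "is_zfs (cyc_V n) (cyc_E n) B"
  shows "2 \<le> card B \<and> (card B = 2 \<longrightarrow> (\<exists>j<n. B = {j, (j+1) mod n}))"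
proof -
  have B: "B \<subseteq> cyc_V n" using z by (simp add: is_zfs_def)
  have fin: "finite B" using B finite_subset by (auto simp: cyc_V_def)
  have irr: "\<not> cyc_E n u u" for u by (simp add: cyc_E_def)
  have c1: "2 \<le> card B"
  proof (rule ccontr)
    assume "\<not> 2 \<le> card B"
    then have "card B \<le> 1" by simp
    have ind: "\<forall>u\<in>B. \<forall>x. cyc_E n u x \<longrightarrow> x \<notin> B"
    proof (intro ballI allI impI notI)
      fix u x assume ux: "u \<in> B" "cyc_E n u x" "x \<in> B"
      then have "u \<noteq> x" using irr by auto
      then have "card {u, x} = 2" by simp
      moreover have "card {u,x} \<le> card B" using ux fin by (intro card_mono) auto
      ultimately show False using \<open>card B \<le> 1\<close> by simp
    qed
    show False using cyc_indep_not_zfs[OF n B ind] \<open>card B \<le> 1\<close> n z by simp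
  qed
  moreover have "card B = 2 \<longrightarrow> (\<exists>j<n. B = {j, (j+1) mod n})"
  proof
    assume "card B = 2"
    then obtain x y where xy: "B = {x,y}" "x \<noteq> y" by (meson card_2_iff)
    have xyn: "x < n" "y < n" using B xy by (auto simp: cyc_V_def)
    show "\<exists>j<n. B = {j, (j+1) mod n}"
    proof (cases "cyc_E n x y")
      case True
      then have "y = (x+1) mod n \<or> x = (y+1) mod n" by (simp add: cyc_E_def)
      then show ?thesis using xy xyn by blast
    next
      case False
      then have ind: "\<forall>u\<in>B. \<forall>x. cyc_E n u x \<longrightarrow> x \<notin> B"
        using xy irr cycE_sym by blast
      show ?thesis using cyc_indep_not_zfs[OF n B ind] \<open>card B = 2\<close> n z by simp
    qed
  qed
  ultimately show ?thesis by blast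
qed

lemma zfs_adj:
  assumes n: "3 \<le> n" "j < n"
  shows "is_zfs (cyc_V n) (cyc_E n) {j, (j+1) mod n}"
proof -
  let ?B = "{j, (j+1) mod n}"
  let ?cl = "zf_closure (cyc_V n) (cyc_E n) ?B"
  have pn: "phi n j (n-1) = j"
  proof -
    have "j + 1 + (n-1) = j + n" using n by simp
    then show ?thesis using n by (simp add: phi_def)
  qed
  have main: "k < n \<longrightarrow> (\<forall>i\<le>k. phi n j i \<in> ?cl)" for k
  proof (induction k)
    case 0
    have "phi n j 0 \<in> ?B" by (simp add: phi_def)
    then show ?case by (auto intro: zf_closure.base)
  next
    case (Suc k)
    show ?case
    proof
      assume k: "Suc k < n"
      then have IH: "\<forall>i\<le>k. phi n j i \<in> ?cl" using Suc by simp
      have kn: "k < n" "k+1 < n" using k by auto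
      have "phi n j (k+1) \<in> ?cl"
      proof (rule zf_closure.force)
        show "phi n j k \<in> ?cl" using IH by simp
        show "phi n j (k+1) \<in> cyc_V n" using phi_lt[OF n(2) kn(2)] by (simp add: cyc_V_def)
        show "cyc_E n (phi n j k) (phi n j (k+1))" unfolding phi_edge[OF n kn] path_E_def using kn by simp
        show "\<forall>x\<in>cyc_V n. cyc_E n (phi n j k) x \<and> x \<noteq> phi n j (k+1) \<longrightarrow> x \<in> ?cl"
        proof (intro ballI impI)
          fix x assume x: "x \<in> cyc_V n" "cyc_E n (phi n j k) x \<and> x \<noteq> phi n j (k+1)"
          obtain z where z: "z < n" "x = phi n j z" using phi_surj[OF n(2)] x by (auto simp: cyc_V_def)
          have "path_E n k z \<or> (k = 0 \<and> z = n-1) \<or> (k = n-1 \<and> z = 0)"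
            using phi_edge[OF n kn(1) z(1)] x z by simp
          moreover have "z \<noteq> k+1" using x z by auto
          ultimately have "z \<le> k \<or> z = n - 1" using kn by (auto simp: path_E_def)
          then show "x \<in> ?cl"
          proof
            assume "z \<le> k" then show ?thesis using IH z by simp
          next
            assume "z = n-1" then have "x = j" using z pn by simp
            then show ?thesis by (auto intro: zf_closure.base)
          qed
        qed
      qed
      then show "\<forall>i\<le>Suc k. phi n j i \<in> ?cl" using IH by (auto simp: le_Suc_eq)
    qed
  qed
  have "cyc_V n \<subseteq> ?cl"
  proof
    fix v assume "v \<in> cyc_V n"
    then obtain z where "z < n" "v = phi n j z" using phi_surj[OF n(2)] by (auto simp: cyc_V_def)
    then show "v \<in> ?cl" using main[of z] by simp
  qed
  moreover have "?B \<subseteq> cyc_V n" using n by (auto simp: cyc_V_def)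
  ultimately show ?thesis by (simp add: is_zfs_def)
qed

lemma card_adj: "2 \<le> n \<Longrightarrow> (j::nat) < n \<Longrightarrow> card {j, (j+1) mod n} = 2"
proof -
  assume h: "2 \<le> n" "j < n"
  have "j \<noteq> (j+1) mod n" using h mod_Suc_lt[OF h(2)] by auto
  then show ?thesis by simp
qed

lemma zf_number_cyc: "3 \<le> n \<Longrightarrow> zf_number (cyc_V n) (cyc_E n) = 2"
proof -
  assume n: "3 \<le> n"
  have fin: "finite {B. is_zfs (cyc_V n) (cyc_E n) B}"
    by (rule finite_subset[of _ "Pow (cyc_V n)"]) (auto simp: is_zfs_def cyc_V_def)
  have mem: "2 \<in> card ` {B. is_zfs (cyc_V n) (cyc_E n) B}"
    using zfs_adj[OF n, of 0] card_adj[of n 0] n by force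
  show ?thesis unfolding zf_number_def
    by (rule Min_eqI) (use fin mem zfs_card[OF n] in auto)
qed

lemma part3:
  assumes n: "3 \<le> n" and C: "\<forall>i<n. 0 < c i \<and> c i < 1"
  shows "eptw_graph (cyc_V n) (cyc_E n) (cyc_W n c) =
          Min ((\<lambda>j. E_path n (\<lambda>i. c ((j + 1 + i) mod n))) ` {..<n})"
proof -
  have S: "{B. is_zfs (cyc_V n) (cyc_E n) B \<and> card B = zf_number (cyc_V n) (cyc_E n)}
     = (\<lambda>j. {j, (j+1) mod n}) ` {..<n}"
  proof (intro equalityI subsetI)
    fix B assume "B \<in> {B. is_zfs (cyc_V n) (cyc_E n) B \<and> card B = zf_number (cyc_V n) (cyc_E n)}"
    then have "is_zfs (cyc_V n) (cyc_E n) B" "card B = 2" using zf_number_cyc[OF n] by auto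
    then show "B \<in> (\<lambda>j. {j, (j+1) mod n}) ` {..<n}" using zfs_card[OF n] by blast
  next
    fix B assume "B \<in> (\<lambda>j. {j, (j+1) mod n}) ` {..<n}"
    then obtain j where j: "j < n" "B = {j, (j+1) mod n}" by auto
    then show "B \<in> {B. is_zfs (cyc_V n) (cyc_E n) B \<and> card B = zf_number (cyc_V n) (cyc_E n)}"
      using zfs_adj[OF n j(1)] card_adj[of n j] n zf_number_cyc[OF n] by simp
  qed
  have "eptw_graph (cyc_V n) (cyc_E n) (cyc_W n c) =
      Min (eptw_set (cyc_V n) (cyc_E n) (cyc_W n c) ` (\<lambda>j. {j, (j+1) mod n}) ` {..<n})"
    unfolding eptw_graph_def S ..
  also have "eptw_set (cyc_V n) (cyc_E n) (cyc_W n c) ` (\<lambda>j. {j, (j+1) mod n}) ` {..<n}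
      = (\<lambda>j. E_path n (\<lambda>i. c ((j + 1 + i) mod n))) ` {..<n}"
    unfolding image_image using eptw_adj[OF n _ C] by (intro image_cong) auto
  finally show ?thesis .
qed


theorem mainTheorem6:
  shows
  "(\<forall>w. (\<forall>i<2. 0 < w i \<and> w i < 1) \<longrightarrow>
        E_path 3 w = 1 / (w 0 + w 1 - w 0 * w 1))
   \<and> (\<forall>n w. 4 \<le> n \<and> (\<forall>i<n - 1. 0 < w i \<and> w i < 1) \<longrightarrow>
        E_path n w =
          (1 + w 0 * (1 - w (n - 2)) * E_path (n - 1) (\<lambda>i. w (i + 1))
             + (1 - w 0) * w (n - 2) * E_path (n - 1) w
             + w 0 * w (n - 2) * E_path (n - 2) (\<lambda>i. w (i + 1)))
          / (w 0 + w (n - 2) - w 0 * w (n - 2)))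
   \<and> (\<forall>n c. 3 \<le> n \<and> (\<forall>i<n. 0 < c i \<and> c i < 1) \<longrightarrow>
        eptw_graph (cyc_V n) (cyc_E n) (cyc_W n c) =
          Min ((\<lambda>j. E_path n (\<lambda>i. c ((j + 1 + i) mod n))) ` {..<n}))"
  using part1 part2 part3 by blast

end
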